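(* Let $V,W$ be finite dimensional real inner product spaces, $A\in\mathrm{Lin}(V\otimes\mathbb{R}^n,W)$, $\mathbb{A}u\coloneqq A(Du)$, $1<p<\infty$, $1\le q\le\infty$. Suppose every $u\in\mathrm{BV}^{\mathbb{A}}_{\mathrm{loc}}(\mathbb{R}^n)$ is $\mathrm{L}^{p,q}$-differentiable at $\mathscr{L}^n$-a.e. $x\in\mathbb{R}^n$. Then $\mathbb{A}$ is elliptic.
   Context: Symbol $\mathbb{A}[\xi]v\coloneqq A(v\otimes\xi)$; elliptic: $\mathbb{A}[\xi]$ injective for all $\xi\ne0$. $\mathrm{BV}^{\mathbb{A}}_{\mathrm{loc}}$: $u\in\mathrm{L}^1_{\mathrm{loc}}(\mathbb{R}^n,V)$ with $\mathbb{A}u$ a $W$-valued Radon measure. Lorentz quasi-norm: for $q<\infty$, $\|f\|_{\mathrm{L}^{p,q}(\Omega)}=p^{1/q}(\int_0^\infty[\lambda\mathscr{L}^n(\{x\in\Omega:|f|>\lambda\})^{1/p}]^q\frac{d\lambda}{\lambda})^{1/q}$, and $\|f\|_{\mathrm{L}^{p,\infty}(\Omega)}=\sup_{\lambda>0}\lambda\mathscr{L}^n(\{x\in\Omega:|f|>\lambda\})^{1/p}$. $u$ is $\mathrm{L}^{p,q}$-differentiable at $x$ if there is an affine $P(y)=a+M(y-x)$ with $\|u-P\|_{\mathrm{L}^{p,q}(B_r(x))}=o(r^{1+n/p})$ as $r\downarrow0$. *)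

theory Defs
  imports "HOL-Analysis.Analysis"
begin

text \<open>The operator A in Lin(V (x) R^n, W) is represented by the bilinear map
  B v xi = A (v (x) xi).  Then the differential operator is
  (AA u) = sum_j B (partial_j u) e_j, and the symbol is AA[xi] v = B v xi.\<close>

definition elliptic :: "('v::euclidean_space \<Rightarrow> 'n::euclidean_space \<Rightarrow> 'w::euclidean_space) \<Rightarrow> bool" where
  "elliptic B \<longleftrightarrow> (\<forall>\<xi>::'n. \<xi> \<noteq> 0 \<longrightarrow> inj (\<lambda>v. B v \<xi>))"

fun Ck :: "nat \<Rightarrow> ('n::euclidean_space \<Rightarrow> real) \<Rightarrow> bool" where
  "Ck 0 f = continuous_on UNIV f"
| "Ck (Suc k) f = ((\<forall>x. f differentiable (at x)) \<and>
      (\<forall>i\<in>Basis. Ck k (\<lambda>x. frechet_derivative f (at x) i)))"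

definition test_function :: "('n::euclidean_space \<Rightarrow> real) \<Rightarrow> bool" where
  "test_function \<phi> \<longleftrightarrow> (\<forall>k. Ck k \<phi>) \<and> compact (closure {x. \<phi> x \<noteq> 0})"

text \<open>A W-valued Radon measure on R^n, written in polar form g * nu with nu a locally
  finite Borel measure (its total variation) and g a Borel density with |g| <= 1.\<close>
definition W_radon :: "'n::euclidean_space measure \<Rightarrow> ('n \<Rightarrow> 'w::euclidean_space) \<Rightarrow> bool" where
  "W_radon \<nu> g \<longleftrightarrow> sets \<nu> = sets lborel \<and> (\<forall>K. compact K \<longrightarrow> emeasure \<nu> K < \<infinity>) \<and>
     g \<in> borel_measurable \<nu> \<and> (\<forall>x. norm (g x) \<le> 1)"

definition L1_loc :: "('n::euclidean_space \<Rightarrow> 'v::euclidean_space) \<Rightarrow> bool" where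
  "L1_loc u \<longleftrightarrow> (\<forall>K. compact K \<longrightarrow> u absolutely_integrable_on K)"

text \<open>u in BV^A_loc: u in L^1_loc and the distribution AA u = sum_j B (partial_j u) e_j
  is a W-valued Radon measure.\<close>
definition BVA_loc :: "('v::euclidean_space \<Rightarrow> 'n::euclidean_space \<Rightarrow> 'w::euclidean_space)
     \<Rightarrow> ('n \<Rightarrow> 'v) \<Rightarrow> bool" where
  "BVA_loc B u \<longleftrightarrow> L1_loc u \<and>
     (\<exists>\<nu> (g::'n \<Rightarrow> 'w). W_radon \<nu> g \<and>
        (\<forall>\<phi>. test_function \<phi> \<longrightarrow>
           (\<integral>x. \<phi> x *\<^sub>R g x \<partial>\<nu>) =
           - (\<Sum>j\<in>Basis. \<integral>x. frechet_derivative \<phi> (at x) j *\<^sub>R B (u x) j \<partial>lebesgue)))"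

definition distr_fun :: "'n::euclidean_space set \<Rightarrow> ('n \<Rightarrow> 'v::real_normed_vector) \<Rightarrow> real \<Rightarrow> ennreal" where
  "distr_fun \<Omega> f t = emeasure lebesgue {x\<in>\<Omega>. norm (f x) > t}"

text \<open>Lorentz quasi-norm ||f||_{L^{p,q}(Omega)}, with q in [1,infinity] (q = top is infinity).\<close>
definition lorentz_norm :: "real \<Rightarrow> ennreal \<Rightarrow> 'n::euclidean_space set \<Rightarrow> ('n \<Rightarrow> 'v::real_normed_vector) \<Rightarrow> ennreal" where
  "lorentz_norm p q \<Omega> f =
    (if q = top then
       (SUP t\<in>{0<..}. (if distr_fun \<Omega> f t = top then top
                        else ennreal (t * enn2real (distr_fun \<Omega> f t) powr (1/p))))
     else
       (let qr = enn2real q;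
            I = (\<integral>\<^sup>+ t\<in>{0<..}.
                   (if distr_fun \<Omega> f t = top then top
                    else ennreal ((t * enn2real (distr_fun \<Omega> f t) powr (1/p)) powr qr / t)) \<partial>lborel)
        in if I = top then top else ennreal (p powr (1/qr) * enn2real I powr (1/qr))))"

definition Lpq_differentiable_at :: "real \<Rightarrow> ennreal \<Rightarrow> ('n::euclidean_space \<Rightarrow> 'v::euclidean_space) \<Rightarrow> 'n \<Rightarrow> bool" where
  "Lpq_differentiable_at p q u x \<longleftrightarrow>
     (\<exists>(a::'v) (M::'n \<Rightarrow> 'v). linear M \<and>
        (\<forall>\<epsilon>>0. \<forall>\<^sub>F r in at_right 0.
           lorentz_norm p q (ball x r) (\<lambda>y. u y - (a + M (y - x)))
             \<le> ennreal (\<epsilon> * r powr (1 + real DIM('n) / p))))"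

end

theory Submission
  imports Defs
begin

lemma emeasure_transl:
  fixes S :: "'a::euclidean_space set"
  shows "emeasure lebesgue ((\<lambda>y. y + a) ` S) = emeasure lebesgue S"
  using emeasure_lebesgue_affine[of 1 a S] by simp

lemma sets_transl:
  fixes S :: "'a::euclidean_space set"
  assumes "S \<in> sets lebesgue"
  shows "(\<lambda>y. y + a) ` S \<in> sets lebesgue"
  using lebesgue_sets_translation[OF assms, of a] by (simp add: add.commute)

lemma measure_ball_pos:
  fixes c :: "'a::euclidean_space"
  assumes "r > 0" shows "measure lebesgue (ball c r) > 0"
  using content_ball_pos[OF assms, of c]
  by (simp add: measure_completion)

lemma open_slab: "open {y. \<bar>y \<bullet> (\<xi>::'a::euclidean_space) - c\<bar> < d}"
  by (intro open_Collect_less continuous_intros)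

lemma slab_upper:
  fixes \<xi> :: "'n::euclidean_space"
  assumes xi: "norm \<xi> = 1" and R: "R > 0" and d: "\<delta> > 0"
  shows "emeasure lebesgue (ball 0 R \<inter> {y. \<bar>y \<bullet> \<xi> - c\<bar> < \<delta>})
          \<le> ennreal (2 * measure lebesgue (ball (0::'n) (3*R)) / R * \<delta>)"
proof -
  define E where "E = ball 0 R \<inter> {y. \<bar>y \<bullet> \<xi> - c\<bar> < \<delta>}"
  define M3 where "M3 = measure lebesgue (ball (0::'n) (3*R))"
  have xx: "\<xi> \<bullet> \<xi> = 1" using xi by (simp add: norm_eq_sqrt_inner)
  have El: "E \<in> lmeasurable" unfolding E_def
    by (intro lmeasurable_open bounded_Int open_Int open_slab) auto
  have Esets: "E \<in> sets lebesgue" using El by (simp add: fmeasurable_def)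
  have M3e: "emeasure lebesgue (ball (0::'n) (3*R)) = ennreal M3"
    unfolding M3_def by (simp add: emeasure_eq_measure2)
  have M3pos: "M3 \<ge> 0" unfolding M3_def by simp
  have mE: "measure lebesgue E \<le> 2 * M3 / R * \<delta>"
  proof (cases "\<delta> \<ge> R")
    case True
    have "measure lebesgue E \<le> M3" unfolding M3_def
      by (rule measure_mono_fmeasurable) (use R in \<open>auto simp: E_def Esets\<close>)
    also have "M3 \<le> 2 * M3 / R * \<delta>"
    proof -
      have "M3 * 1 \<le> M3 * (2 * \<delta> / R)" using True R M3pos
        by (intro mult_left_mono) (auto simp: field_simps)
      then show ?thesis by (simp add: field_simps)
    qed
    finally show ?thesis .
  next
    case False
    define N where "N = nat \<lfloor>R / \<delta>\<rfloor>"
    have N1: "N \<ge> 1" using False d unfolding N_def by (simp add: le_nat_iff one_le_floor)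
    have NdR: "real N * \<delta> \<le> R"
    proof -
      have "real N = of_int \<lfloor>R / \<delta>\<rfloor>" unfolding N_def using False d
        by (simp add: N_def)
      also have "\<dots> \<le> R / \<delta>" by simp
      finally show ?thesis using d by (simp add: field_simps)
    qed
    have NdR2: "R < (real N + 1) * \<delta>"
    proof -
      have "real N = of_int \<lfloor>R / \<delta>\<rfloor>" unfolding N_def using R d
        by (simp add: N_def)
      then have "R / \<delta> < real N + 1" by linarith
      then show ?thesis using d by (simp add: field_simps)
    qed
    define A where "A k = (\<lambda>y. y + (2 * real k * \<delta>) *\<^sub>R \<xi>) ` E" for k
    have Asets: "A k \<in> sets lebesgue" for k unfolding A_def by (rule sets_transl[OF Esets])
    have Ameas: "emeasure lebesgue (A k) = emeasure lebesgue E" for k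
      unfolding A_def by (rule emeasure_transl)
    have Aslab: "\<bar>y \<bullet> \<xi> - c - 2 * real k * \<delta>\<bar> < \<delta>" if "y \<in> A k" for y k
      using that by (auto simp: A_def E_def inner_add_left xx)
    have disj: "disjoint_family_on A {..<N}"
      unfolding disjoint_family_on_def
    proof (intro ballI impI)
      fix i j assume "i \<in> {..<N}" "j \<in> {..<N}" "i \<noteq> j"
      show "A i \<inter> A j = {}"
      proof (rule ccontr)
        assume "A i \<inter> A j \<noteq> {}"
        then obtain y where "y \<in> A i" "y \<in> A j" by blast
        from Aslab[OF this(1)] Aslab[OF this(2)]
        have "\<bar>2 * real i * \<delta> - 2 * real j * \<delta>\<bar> < 2 * \<delta>" by linarith
        moreover have "\<bar>2 * real i * \<delta> - 2 * real j * \<delta>\<bar> = (2*\<delta>) * \<bar>real i - real j\<bar>"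
        proof -
          have "2 * real i * \<delta> - 2 * real j * \<delta> = (2*\<delta>) * (real i - real j)" by (simp add: algebra_simps)
          then show ?thesis using d by (simp add: abs_mult)
        qed
        ultimately have "(2*\<delta>) * \<bar>real i - real j\<bar> < (2*\<delta>) * 1" by simp
        then have "\<bar>real i - real j\<bar> < 1" using d mult_less_cancel_left_pos[of "2*\<delta>"] by simp
        with \<open>i \<noteq> j\<close> show False by linarith
      qed
    qed
    have Asub: "(\<Union>k\<in>{..<N}. A k) \<subseteq> ball 0 (3*R)"
    proof
      fix y assume "y \<in> (\<Union>k\<in>{..<N}. A k)"
      then obtain k y0 where k: "k < N" and y0: "y0 \<in> E" and y: "y = y0 + (2 * real k * \<delta>) *\<^sub>R \<xi>"
        by (auto simp: A_def)
      have "norm y \<le> norm y0 + 2 * real k * \<delta>" using y xi d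
        by (metis norm_triangle_ineq norm_scaleR abs_of_nonneg mult_nonneg_nonneg of_nat_0_le_iff
            zero_le_numeral less_eq_real_def mult.right_neutral)
      also have "\<dots> < R + 2 * (real N * \<delta>)" using y0 k d
        by (auto simp: E_def intro!: add_less_le_mono mult_right_mono)
      also have "\<dots> \<le> 3 * R" using NdR by simp
      finally show "y \<in> ball 0 (3*R)" by simp
    qed
    have "of_nat N * emeasure lebesgue E = (\<Sum>k<N. emeasure lebesgue (A k))"
      by (simp add: Ameas)
    also have "\<dots> = emeasure lebesgue (\<Union>k\<in>{..<N}. A k)"
      by (rule sum_emeasure) (use Asets disj in auto)
    also have "\<dots> \<le> emeasure lebesgue (ball (0::'n) (3*R))"
      by (rule emeasure_mono[OF Asub]) simp
    finally have "ennreal (real N * measure lebesgue E) \<le> ennreal M3"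
      using El M3e by (simp add: emeasure_eq_measure2 ennreal_mult' ennreal_of_nat_eq_real_of_nat)
    then have NE: "real N * measure lebesgue E \<le> M3" using M3pos by simp
    have "R < 2 * real N * \<delta>" using NdR2 N1 d by (smt (verit) mult_right_mono of_nat_1 of_nat_le_iff)
    then have "1 / real N < 2 * \<delta> / R" using N1 R by (simp add: field_simps)
    have "measure lebesgue E \<le> M3 / real N" using NE N1 by (simp add: field_simps)
    also have "\<dots> \<le> M3 * (2 * \<delta> / R)"
      using \<open>1 / real N < 2 * \<delta> / R\<close> M3pos by (simp add: divide_inverse mult_left_mono less_imp_le) 
    finally show ?thesis by (simp add: field_simps)
  qed
  show ?thesis
    using mE El unfolding E_def[symmetric] M3_def[symmetric]
    by (simp add: emeasure_eq_measure2 ennreal_leI)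
qed


lemma borel_lebesgue_sets: "(S::'a::euclidean_space set) \<in> sets borel \<Longrightarrow> S \<in> sets lebesgue"
  by (metis sets_completionI_sets sets_lborel)

lemma slab_lower:
  fixes \<xi> x :: "'n::euclidean_space"
  assumes xi: "norm \<xi> = 1" and r: "r > 0" and d: "\<delta> > 0" and dr: "\<delta> \<le> r/4"
    and xc: "\<bar>x \<bullet> \<xi> - c\<bar> \<le> r/4"
  shows "ennreal (measure lebesgue (ball x (r/4)) * (2*\<delta>/(3*r)))
          \<le> emeasure lebesgue (ball x r \<inter> {y. c < y \<bullet> \<xi> \<and> y \<bullet> \<xi> \<le> c + \<delta>})"
proof -
  define E where "E = ball x r \<inter> {y. c < y \<bullet> \<xi> \<and> y \<bullet> \<xi> \<le> c + \<delta>}"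
  define G where "G = measure lebesgue (ball x (r/4))"
  have xx: "\<xi> \<bullet> \<xi> = 1" using xi by (simp add: norm_eq_sqrt_inner)
  have Eb: "E \<in> sets borel" unfolding E_def
  proof (intro sets.Int)
    have "{y. c < y \<bullet> \<xi> \<and> y \<bullet> \<xi> \<le> c + \<delta>} = {y. c < y \<bullet> \<xi>} \<inter> {y. y \<bullet> \<xi> \<le> c + \<delta>}" by auto
    moreover have "open {y. c < y \<bullet> \<xi>}" by (intro open_Collect_less continuous_intros)
    moreover have "closed {y. y \<bullet> \<xi> \<le> c + \<delta>}" by (intro closed_Collect_le continuous_intros)
    ultimately show "{y. c < y \<bullet> \<xi> \<and> y \<bullet> \<xi> \<le> c + \<delta>} \<in> sets borel" by auto
  qed auto
  have Esets: "E \<in> sets lebesgue" by (rule borel_lebesgue_sets[OF Eb])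
  have Efin: "emeasure lebesgue E < \<infinity>"
    by (rule le_less_trans[OF emeasure_mono[of E "ball x r"]]) (auto simp: E_def emeasure_eq_measure2 ennreal_less_top)
  define N where "N = nat \<lceil>r / (2*\<delta>)\<rceil>"
  have rd2: "r / (2*\<delta>) \<ge> 2" using dr d by (simp add: field_simps)
  have Nr: "real N = of_int \<lceil>r / (2*\<delta>)\<rceil>" unfolding N_def using rd2 by simp
  have N1: "r / (2*\<delta>) \<le> real N" using Nr by linarith
  have N2: "real N < r / (2*\<delta>) + 1" using Nr by linarith
  have Nd1: "r/2 \<le> real N * \<delta>" using N1 d by (simp add: field_simps)
  have Nd2: "real N * \<delta> < r/2 + \<delta>" using N2 d by (simp add: field_simps)
  define J where "J = {- int N ..< int N}"
  define A where "A j = (\<lambda>y. y + (real_of_int j * \<delta>) *\<^sub>R \<xi>) ` E" for j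
  have Asets: "A j \<in> sets lebesgue" for j unfolding A_def by (rule sets_transl[OF Esets])
  have Ameas: "emeasure lebesgue (A j) = emeasure lebesgue E" for j
    unfolding A_def by (rule emeasure_transl)
  have cover: "ball x (r/4) \<subseteq> (\<Union>j\<in>J. A j)"
  proof
    fix y assume y: "y \<in> ball x (r/4)"
    define s where "s = y \<bullet> \<xi> - c"
    have "\<bar>y \<bullet> \<xi> - x \<bullet> \<xi>\<bar> \<le> norm (y - x)"
      using Cauchy_Schwarz_ineq2[of "y - x" \<xi>] xi by (simp add: inner_diff_left)
    also have "\<dots> < r/4" using y by (simp add: dist_norm norm_minus_commute)
    finally have s: "\<bar>s\<bar> < r/2" using xc unfolding s_def by linarith
    define j where "j = \<lceil>s / \<delta>\<rceil> - 1"
    have j1: "real_of_int j * \<delta> < s"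
    proof -
      have "real_of_int j < s / \<delta>" unfolding j_def by linarith
      then show ?thesis using d by (simp add: field_simps)
    qed
    have j2: "s \<le> (real_of_int j + 1) * \<delta>"
    proof -
      have "s / \<delta> \<le> real_of_int j + 1" unfolding j_def by linarith
      then show ?thesis using d by (simp add: field_simps)
    qed
    have sN: "- real N < s / \<delta>" "s / \<delta> < real N"
      using s Nd1 d by (auto simp: field_simps)
    have jJ: "j \<in> J"
    proof -
      have "- int N < \<lceil>s / \<delta>\<rceil>" using sN(1) by (simp add: less_ceiling_iff)
      moreover have "\<lceil>s / \<delta>\<rceil> \<le> int N" using sN(2) by (simp add: ceiling_le_iff)
      ultimately show ?thesis unfolding J_def j_def by auto
    qed
    have jabs: "\<bar>real_of_int j\<bar> \<le> real N" using jJ unfolding J_def by auto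
    define y0 where "y0 = y - (real_of_int j * \<delta>) *\<^sub>R \<xi>"
    have "norm (y0 - x) \<le> norm (y - x) + \<bar>real_of_int j * \<delta>\<bar>"
    proof -
      have "y0 - x = (y - x) - (real_of_int j * \<delta>) *\<^sub>R \<xi>" unfolding y0_def by simp
      then have "norm (y0 - x) \<le> norm (y - x) + norm ((real_of_int j * \<delta>) *\<^sub>R \<xi>)"
        by (metis norm_triangle_ineq4)
      then show ?thesis using xi by simp
    qed
    also have "\<dots> < r/4 + real N * \<delta>"
    proof (rule add_less_le_mono)
      show "norm (y - x) < r/4" using y by (simp add: dist_norm norm_minus_commute)
      have "\<bar>real_of_int j * \<delta>\<bar> = \<bar>real_of_int j\<bar> * \<delta>" using d by (simp add: abs_mult)
      also have "\<dots> \<le> real N * \<delta>" using jabs d by (intro mult_right_mono) auto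
      finally show "\<bar>real_of_int j * \<delta>\<bar> \<le> real N * \<delta>" .
    qed
    also have "\<dots> \<le> r" using Nd2 dr by linarith
    finally have y0b: "y0 \<in> ball x r" by (simp add: dist_norm norm_minus_commute)
    have "y0 \<bullet> \<xi> - c = s - real_of_int j * \<delta>" unfolding y0_def s_def by (simp add: inner_diff_left xx)
    then have "y0 \<in> E" using j1 j2 y0b unfolding E_def by (auto simp: algebra_simps)
    then have "y \<in> A j" unfolding A_def y0_def by (intro image_eqI[of _ _ y0]) (auto simp: y0_def)
    then show "y \<in> (\<Union>j\<in>J. A j)" using jJ by blast
  qed
  have cardJ: "card J = 2 * N" unfolding J_def by simp
  have "ennreal G = emeasure lebesgue (ball x (r/4))" unfolding G_def by (simp add: emeasure_eq_measure2)
  also have "\<dots> \<le> emeasure lebesgue (\<Union>j\<in>J. A j)"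
    by (rule emeasure_mono[OF cover]) (use Asets J_def in auto)
  also have "\<dots> \<le> (\<Sum>j\<in>J. emeasure lebesgue (A j))"
    by (rule emeasure_subadditive_finite) (use Asets J_def in auto)
  also have "\<dots> = of_nat (2*N) * emeasure lebesgue E" by (simp add: Ameas cardJ)
  finally have "ennreal G \<le> ennreal (real (2*N) * measure lebesgue E)"
    using Efin by (simp add: emeasure_eq_ennreal_measure ennreal_mult' ennreal_of_nat_eq_real_of_nat)
  moreover have G0: "G \<ge> 0" unfolding G_def by simp
  ultimately have GE: "G \<le> real (2*N) * measure lebesgue E"
    using measure_nonneg[of lebesgue E] by (auto simp: ennreal_le_iff2)
  have Npos: "real N > 0" using N1 rd2 by linarith
  have "2 * real N < 3*r / (2*\<delta>)" using N2 rd2 by (simp add: field_simps)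
  then have "2 * real N * (2*\<delta>) < 3*r" using d by (simp add: field_simps)
  then have "2*\<delta>/(3*r) \<le> 1 / (2 * real N)" using Npos d r by (simp add: field_simps)
  then have "G * (2*\<delta>/(3*r)) \<le> G * (1 / (2 * real N))"
    using G0 by (rule mult_left_mono)
  also have "\<dots> = G / (2 * real N)" by simp
  also have "\<dots> \<le> measure lebesgue E" using GE Npos by (simp add: field_simps)
  finally show ?thesis unfolding E_def[symmetric] G_def[symmetric]
    using Efin by (simp add: emeasure_eq_ennreal_measure ennreal_leI)
qed

lemma dyadic_pick:
  fixes t :: real assumes "0 < t" "t < 1"
  shows "\<exists>m. (1/2)^(Suc m) \<le> t \<and> t < (1/2)^m"
proof -
  obtain n where n: "(1/2::real)^n < t" using real_arch_pow_inv[of t "1/2"] assms by auto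
  define m0 where "m0 = (LEAST k. (1/2::real)^k \<le> t)"
  have m0: "(1/2::real)^m0 \<le> t" unfolding m0_def by (rule LeastI[of _ n]) (use n in auto)
  have m0pos: "m0 \<noteq> 0" using m0 assms by (cases m0) auto
  then obtain m where m: "m0 = Suc m" by (cases m0) auto
  have "\<not> (1/2::real)^m \<le> t"
  proof
    assume "(1/2::real)^m \<le> t"
    then have "m0 \<le> m" unfolding m0_def by (rule Least_le)
    with m show False by simp
  qed
  then show ?thesis using m0 m by (intro exI[of _ m]) auto
qed

lemma sing_pointwise:
  fixes s a :: real assumes a: "0 < a" "a < 1"
  shows "\<exists>m. \<bar>s\<bar> powr (-a) \<le> 1 \<or> (\<bar>s\<bar> < (1/2)^m \<and> \<bar>s\<bar> powr (-a) \<le> 2 powr a * (2 powr a)^m)"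
proof (cases "\<bar>s\<bar> \<ge> 1 \<or> s = 0")
  case True
  then have "\<bar>s\<bar> powr (-a) \<le> 1"
  proof
    assume "1 \<le> \<bar>s\<bar>"
    then have "1 \<le> \<bar>s\<bar> powr a" using a by (intro ge_one_powr_ge_zero) auto
    then show ?thesis by (simp add: powr_minus_divide divide_le_eq)
  qed simp
  then show ?thesis by auto
next
  case False
  then obtain m where m: "(1/2)^(Suc m) \<le> \<bar>s\<bar>" "\<bar>s\<bar> < (1/2)^m"
    using dyadic_pick[of "\<bar>s\<bar>"] by auto
  have "\<bar>s\<bar> powr (-a) \<le> ((1/2)^(Suc m)) powr (-a)"
    using m False a by (intro powr_mono2') auto
  also have "((1/2::real)^(Suc m)) powr (-a) = 2 powr a * (2 powr a)^m"
  proof -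
    have "(2::real) powr (- real (Suc m)) = 1 / 2 ^ Suc m"
      by (subst powr_minus_divide, subst powr_realpow) auto
    then have "((1/2::real)^(Suc m)) = 2 powr (- real (Suc m))"
      by (simp add: power_one_over)
    then have "((1/2::real)^(Suc m)) powr (-a) = 2 powr (real (Suc m) * a)"
      by (simp only: powr_powr mult_minus_left mult_minus_right minus_minus)
    also have "\<dots> = 2 powr a * 2 powr (real m * a)" by (simp add: powr_add[symmetric] algebra_simps)
    also have "2 powr (real m * a) = (2 powr a)^m" by (simp add: powr_power)
    finally show ?thesis .
  qed
  finally show ?thesis using m by blast
qed

lemma sing_int_bound:
  fixes \<xi> :: "'n::euclidean_space"
  assumes xi: "norm \<xi> = 1" and R: "R > 0" and a: "0 < a" "a < 1"
  shows "\<exists>C. \<forall>c. (\<integral>\<^sup>+y. ennreal (\<bar>y \<bullet> \<xi> - c\<bar> powr (-a)) * indicator (ball 0 R) y \<partial>lebesgue) \<le> ennreal C"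
proof -
  define K where "K = 2 * measure lebesgue (ball (0::'n) (3*R)) / R"
  define \<rho> where "\<rho> = 2 powr a / 2"
  have K0: "K \<ge> 0" unfolding K_def using R by simp
  have \<rho>0: "0 < \<rho>" unfolding \<rho>_def by simp
  have \<rho>1: "\<rho> < 1" unfolding \<rho>_def using a powr_less_mono[of a 1 2] by simp
  define C where "C = measure lebesgue (ball (0::'n) R) + 2 powr a * K / (1 - \<rho>)"
  have "(\<integral>\<^sup>+y. ennreal (\<bar>y \<bullet> \<xi> - c\<bar> powr (-a)) * indicator (ball 0 R) y \<partial>lebesgue) \<le> ennreal C" for c
  proof -
    define S where "S m = ball (0::'n) R \<inter> {y. \<bar>y \<bullet> \<xi> - c\<bar> < (1/2)^m}" for m
    have Ssets: "S m \<in> sets lebesgue" for m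
      unfolding S_def by (intro borel_lebesgue_sets borel_open open_Int open_slab) auto
    have Sm: "emeasure lebesgue (S m) \<le> ennreal (K * (1/2)^m)" for m
      unfolding S_def K_def using slab_upper[OF xi R, of "(1/2)^m" c] by simp
    have pw: "ennreal (\<bar>y \<bullet> \<xi> - c\<bar> powr (-a)) * indicator (ball 0 R) y
        \<le> indicator (ball 0 R) y + (\<Sum>m. ennreal (2 powr a * (2 powr a)^m) * indicator (S m) y)" for y
    proof (cases "y \<in> ball 0 R")
      case False then show ?thesis by simp
    next
      case True
      obtain m where m: "\<bar>y \<bullet> \<xi> - c\<bar> powr (-a) \<le> 1 \<or> (\<bar>y \<bullet> \<xi> - c\<bar> < (1/2)^m \<and>
          \<bar>y \<bullet> \<xi> - c\<bar> powr (-a) \<le> 2 powr a * (2 powr a)^m)"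
        using sing_pointwise[OF a, of "y \<bullet> \<xi> - c"] by blast
      then show ?thesis
      proof
        assume "\<bar>y \<bullet> \<xi> - c\<bar> powr (-a) \<le> 1"
        then have "ennreal (\<bar>y \<bullet> \<xi> - c\<bar> powr (-a)) * indicator (ball 0 R) y \<le> indicator (ball 0 R) y"
          using True by (simp add: ennreal_leI)
        then show ?thesis by (intro add_increasing2) auto
      next
        assume mm: "\<bar>y \<bullet> \<xi> - c\<bar> < (1/2)^m \<and> \<bar>y \<bullet> \<xi> - c\<bar> powr (-a) \<le> 2 powr a * (2 powr a)^m"
        have "ennreal (\<bar>y \<bullet> \<xi> - c\<bar> powr (-a)) * indicator (ball 0 R) y
            \<le> ennreal (2 powr a * (2 powr a)^m) * indicator (S m) y"
          using mm True by (simp add: S_def ennreal_leI)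
        also have "\<dots> \<le> (\<Sum>m. ennreal (2 powr a * (2 powr a)^m) * indicator (S m) y)"
        proof -
          define g where "g m = ennreal (2 powr a * (2 powr a)^m) * indicator (S m) y" for m
          have "(\<Sum>i\<in>{m}. g i) \<le> (\<Sum>i. g i)" by (rule sum_le_suminf[OF summableI]) auto
          then have gm: "g m \<le> (\<Sum>i. g i)" by simp
          show ?thesis using gm unfolding g_def .
        qed
        finally show ?thesis by (intro add_increasing) auto
      qed
    qed
    have "(\<integral>\<^sup>+y. ennreal (\<bar>y \<bullet> \<xi> - c\<bar> powr (-a)) * indicator (ball 0 R) y \<partial>lebesgue)
        \<le> (\<integral>\<^sup>+y. indicator (ball 0 R) y + (\<Sum>m. ennreal (2 powr a * (2 powr a)^m) * indicator (S m) y) \<partial>lebesgue)"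
      by (rule nn_integral_mono) (rule pw)
    also have "\<dots> = emeasure lebesgue (ball (0::'n) R) + (\<Sum>m. ennreal (2 powr a * (2 powr a)^m) * emeasure lebesgue (S m))"
    proof -
      have mb: "(\<lambda>y. indicator (ball (0::'n) R) y :: ennreal) \<in> borel_measurable lebesgue"
        by (rule borel_measurable_indicator) (simp add: fmeasurable_def)
      have ms: "(\<lambda>y. ennreal (2 powr a * (2 powr a)^m) * indicator (S m) y) \<in> borel_measurable lebesgue" for m
        using Ssets[of m] by measurable
      have ms2: "(\<lambda>y. (\<Sum>m. ennreal (2 powr a * (2 powr a)^m) * indicator (S m) y)) \<in> borel_measurable lebesgue"
        by (rule borel_measurable_suminf_order) (rule ms)
      have bs: "ball (0::'n) R \<in> sets lebesgue" by (simp add: fmeasurable_def)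
      show ?thesis
        by (simp only: nn_integral_add[OF mb ms2] nn_integral_suminf[OF ms] nn_integral_cmult_indicator[OF Ssets]
            nn_integral_indicator[OF bs])
    qed
    also have "\<dots> \<le> ennreal (measure lebesgue (ball (0::'n) R)) + (\<Sum>m. ennreal (2 powr a * K * \<rho>^m))"
    proof (intro add_mono suminf_le)
      show "emeasure lebesgue (ball (0::'n) R) \<le> ennreal (measure lebesgue (ball (0::'n) R))"
        by (simp add: emeasure_eq_measure2)
      fix m
      have "ennreal (2 powr a * (2 powr a)^m) * emeasure lebesgue (S m)
          \<le> ennreal (2 powr a * (2 powr a)^m) * ennreal (K * (1/2)^m)"
        by (rule mult_left_mono[OF Sm]) simp
      also have "\<dots> = ennreal (2 powr a * K * \<rho>^m)"
        by (simp add: ennreal_mult'[symmetric] \<rho>_def power_divide K0 field_simps)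
      finally show "ennreal (2 powr a * (2 powr a)^m) * emeasure lebesgue (S m) \<le> ennreal (2 powr a * K * \<rho>^m)" .
    qed auto
    also have "(\<Sum>m. ennreal (2 powr a * K * \<rho>^m)) = ennreal (2 powr a * K / (1 - \<rho>))"
    proof -
      have "(\<Sum>m. ennreal (2 powr a * K * \<rho>^m)) = ennreal (\<Sum>m. 2 powr a * K * \<rho>^m)"
        by (rule suminf_ennreal2) (use K0 \<rho>0 \<rho>1 in \<open>auto intro!: summable_mult summable_geometric\<close>)
      also have "(\<Sum>m. 2 powr a * K * \<rho>^m) = 2 powr a * K * (1 / (1 - \<rho>))"
        using \<rho>0 \<rho>1 by (subst suminf_mult) (auto simp: suminf_geometric summable_geometric)
      finally show ?thesis by simp
    qed
    also have "ennreal (measure lebesgue (ball (0::'n) R)) + ennreal (2 powr a * K / (1 - \<rho>)) = ennreal C"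
      unfolding C_def using K0 \<rho>1 by (subst ennreal_plus) auto
    finally show ?thesis .
  qed
  then show ?thesis by blast
qed

definition qs :: "nat \<Rightarrow> real" where "qs k = from_nat_into (\<rat>::real set) k"

definition Fs :: "real \<Rightarrow> 'n::euclidean_space \<Rightarrow> 'n \<Rightarrow> ennreal" where
  "Fs a \<xi> y = (\<Sum>k. ennreal ((1/2)^k * \<bar>y \<bullet> \<xi> - qs k\<bar> powr (-a)))"

lemma ball_borel[measurable]: "ball (c::'a::metric_space) r \<in> sets borel"
  by simp

lemma Fs_meas_lborel[measurable]: "Fs a \<xi> \<in> borel_measurable lborel"
  unfolding Fs_def by measurable

lemma Fs_meas: "Fs a \<xi> \<in> borel_measurable lebesgue"
  by (rule measurable_completion) (rule Fs_meas_lborel)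

lemma Fs_int:
  fixes \<xi> :: "'n::euclidean_space"
  assumes xi: "norm \<xi> = 1" and R: "R > 0" and a: "0 < a" "a < 1"
  shows "(\<integral>\<^sup>+y. Fs a \<xi> y * indicator (ball 0 R) y \<partial>lebesgue) < \<infinity>"
proof -
  obtain C where C: "\<And>c. (\<integral>\<^sup>+y. ennreal (\<bar>y \<bullet> \<xi> - c\<bar> powr (-a)) * indicator (ball 0 R) y \<partial>lebesgue) \<le> ennreal C"
    using sing_int_bound[OF xi R a] by blast
  have mk: "(\<lambda>y. ennreal ((1/2)^k * \<bar>y \<bullet> \<xi> - qs k\<bar> powr (-a)) * indicator (ball 0 R) y) \<in> borel_measurable lebesgue" for k
    by (rule measurable_completion) measurable
  have mk2: "(\<lambda>y. ennreal (\<bar>y \<bullet> \<xi> - qs k\<bar> powr (-a)) * indicator (ball 0 R) y) \<in> borel_measurable lebesgue" for k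
    by (rule measurable_completion) measurable
  have "(\<integral>\<^sup>+y. Fs a \<xi> y * indicator (ball 0 R) y \<partial>lebesgue)
      = (\<integral>\<^sup>+y. (\<Sum>k. ennreal ((1/2)^k * \<bar>y \<bullet> \<xi> - qs k\<bar> powr (-a)) * indicator (ball 0 R) y) \<partial>lebesgue)"
    unfolding Fs_def by simp
  also have "\<dots> = (\<Sum>k. \<integral>\<^sup>+y. ennreal ((1/2)^k * \<bar>y \<bullet> \<xi> - qs k\<bar> powr (-a)) * indicator (ball 0 R) y \<partial>lebesgue)"
    by (rule nn_integral_suminf[OF mk])
  also have "\<dots> = (\<Sum>k. ennreal ((1/2)^k) * \<integral>\<^sup>+y. ennreal (\<bar>y \<bullet> \<xi> - qs k\<bar> powr (-a)) * indicator (ball 0 R) y \<partial>lebesgue)"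
  proof (rule suminf_cong)
    fix k
    have "(\<integral>\<^sup>+y. ennreal ((1/2)^k * \<bar>y \<bullet> \<xi> - qs k\<bar> powr (-a)) * indicator (ball 0 R) y \<partial>lebesgue)
       = (\<integral>\<^sup>+y. ennreal ((1/2)^k) * (ennreal (\<bar>y \<bullet> \<xi> - qs k\<bar> powr (-a)) * indicator (ball 0 R) y) \<partial>lebesgue)"
      by (simp add: ennreal_mult mult.assoc)
    also have "\<dots> = ennreal ((1/2)^k) * \<integral>\<^sup>+y. ennreal (\<bar>y \<bullet> \<xi> - qs k\<bar> powr (-a)) * indicator (ball 0 R) y \<partial>lebesgue"
      by (rule nn_integral_cmult[OF mk2])
    finally show "(\<integral>\<^sup>+y. ennreal ((1/2)^k * \<bar>y \<bullet> \<xi> - qs k\<bar> powr (-a)) * indicator (ball 0 R) y \<partial>lebesgue)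
       = ennreal ((1/2)^k) * \<integral>\<^sup>+y. ennreal (\<bar>y \<bullet> \<xi> - qs k\<bar> powr (-a)) * indicator (ball 0 R) y \<partial>lebesgue" .
  qed
  also have "\<dots> \<le> (\<Sum>k. ennreal ((1/2)^k) * ennreal C)"
    by (intro suminf_le mult_left_mono C) auto
  also have "\<dots> = ennreal 2 * ennreal C"
  proof -
    have "(\<Sum>k. ennreal ((1/2::real)^k)) = ennreal (\<Sum>k. (1/2::real)^k)"
      by (rule suminf_ennreal2) (auto simp: summable_geometric)
    also have "(\<Sum>k. (1/2::real)^k) = 2" using suminf_geometric[of "1/2::real"] by simp
    finally show ?thesis by (simp add: ennreal_suminf_multc)
  qed
  also have "\<dots> < \<infinity>" by (simp add: ennreal_mult_less_top)
  finally show ?thesis .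
qed

lemma u_L1loc:
  fixes \<xi> :: "'n::euclidean_space" and w :: "'v::euclidean_space"
  assumes xi: "norm \<xi> = 1" and a: "0 < a" "a < 1"
  shows "L1_loc (\<lambda>y. enn2real (Fs a \<xi> y) *\<^sub>R w)"
  unfolding L1_loc_def
proof (intro allI impI)
  fix K :: "'n set" assume K: "compact K"
  obtain R where R: "R > 0" "K \<subseteq> ball 0 R"
    using compact_imp_bounded[OF K] bounded_subset_ballD by blast
  have Ks: "K \<in> sets lebesgue"
    using K by (intro borel_lebesgue_sets borel_closed compact_imp_closed)
  have [measurable]: "K \<in> sets lebesgue" by (rule Ks)
  show "(\<lambda>y. enn2real (Fs a \<xi> y) *\<^sub>R w) absolutely_integrable_on K"
    unfolding set_integrable_def
  proof (rule integrableI_bounded)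
    have mF: "(\<lambda>x. enn2real (Fs a \<xi> x)) \<in> borel_measurable lebesgue"
      by (rule measurable_completion) measurable
    show "(\<lambda>x. indicator K x *\<^sub>R enn2real (Fs a \<xi> x) *\<^sub>R w) \<in> borel_measurable lebesgue"
      by (intro borel_measurable_scaleR borel_measurable_indicator Ks mF borel_measurable_const)
    have "(\<integral>\<^sup>+x. ennreal (norm (indicator K x *\<^sub>R enn2real (Fs a \<xi> x) *\<^sub>R w)) \<partial>lebesgue)
        \<le> (\<integral>\<^sup>+x. ennreal (norm w) * (Fs a \<xi> x * indicator (ball 0 R) x) \<partial>lebesgue)"
    proof (rule nn_integral_mono)
      fix x
      show "ennreal (norm (indicator K x *\<^sub>R enn2real (Fs a \<xi> x) *\<^sub>R w))
          \<le> ennreal (norm w) * (Fs a \<xi> x * indicator (ball 0 R) x)"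
      proof (cases "x \<in> K")
        case False then show ?thesis by simp
      next
        case True
        then have xb: "x \<in> ball 0 R" using R by auto
        have "ennreal (norm (indicator K x *\<^sub>R enn2real (Fs a \<xi> x) *\<^sub>R w))
            = ennreal (norm w) * ennreal (enn2real (Fs a \<xi> x))"
          using True by (simp add: ennreal_mult' mult.commute)
        also have "ennreal (enn2real (Fs a \<xi> x)) \<le> Fs a \<xi> x"
          by (simp add: ennreal_enn2real_if)
        then have "ennreal (norm w) * ennreal (enn2real (Fs a \<xi> x)) \<le> ennreal (norm w) * Fs a \<xi> x"
          by (rule mult_left_mono) simp
        finally show ?thesis using xb by simp
      qed
    qed
    also have "\<dots> = ennreal (norm w) * (\<integral>\<^sup>+x. Fs a \<xi> x * indicator (ball 0 R) x \<partial>lebesgue)"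
      by (rule nn_integral_cmult) (rule measurable_completion, measurable)
    also have "\<dots> < \<infinity>"
      using Fs_int[OF xi R(1) a] by (simp add: ennreal_mult_less_top)
    finally show "(\<integral>\<^sup>+x. ennreal (norm (indicator K x *\<^sub>R enn2real (Fs a \<xi> x) *\<^sub>R w)) \<partial>lebesgue) < \<infinity>" .
  qed
qed

lemma Fs_AE_finite:
  fixes \<xi> :: "'n::euclidean_space"
  assumes xi: "norm \<xi> = 1" and R: "R > 0" and a: "0 < a" "a < 1"
  shows "AE y in lebesgue. y \<in> ball 0 R \<longrightarrow> Fs a \<xi> y \<noteq> \<infinity>"
proof -
  have "AE y in lebesgue. Fs a \<xi> y * indicator (ball 0 R) y \<noteq> \<infinity>"
  proof (rule nn_integral_PInf_AE)
    show "(\<lambda>x. Fs a \<xi> x * indicator (ball 0 R) x) \<in> borel_measurable lebesgue"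
      by (rule measurable_completion) measurable
    show "(\<integral>\<^sup>+y. Fs a \<xi> y * indicator (ball 0 R) y \<partial>lebesgue) \<noteq> \<infinity>"
      using Fs_int[OF xi R a] by (simp add: less_top)
  qed
  then show ?thesis by eventually_elim auto
qed

lemma unbounded_top: "(\<And>N::real. ennreal N \<le> x) \<Longrightarrow> x = top"
proof (cases x rule: ennreal_cases)
  case (real r)
  assume h: "\<And>N::real. ennreal N \<le> x"
  from h[of "r+1"] real have "r + 1 \<le> r" by (simp add: ennreal_le_iff)
  then show ?thesis by simp
qed simp

lemma lorentz_top_generic:
  fixes \<Omega> :: "'n::euclidean_space set" and g :: "'n \<Rightarrow> 'v::real_normed_vector"
  assumes fin: "\<And>t. distr_fun \<Omega> g t \<noteq> top"
    and mono: "\<And>s t. 0 < s \<Longrightarrow> s \<le> t \<Longrightarrow> distr_fun \<Omega> g t \<le> distr_fun \<Omega> g s"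
    and big: "\<And>N. \<exists>t>0. N \<le> t * enn2real (distr_fun \<Omega> g t) powr (1/p)"
    and p: "p > 0" and q: "1 \<le> q"
  shows "lorentz_norm p q \<Omega> g = top"
proof -
  define D where "D t = enn2real (distr_fun \<Omega> g t)" for t
  have D0: "D t \<ge> 0" for t unfolding D_def by simp
  have Dmono: "D t \<le> D s" if "0 < s" "s \<le> t" for s t
    unfolding D_def using mono[OF that] fin by (simp add: enn2real_mono less_top)
  show ?thesis
  proof (cases "q = top")
    case True
    have "(SUP t\<in>{0<..}. (if distr_fun \<Omega> g t = top then top
                        else ennreal (t * enn2real (distr_fun \<Omega> g t) powr (1/p)))) = top"
    proof (rule unbounded_top)
      fix N :: real
      obtain t where t: "t > 0" "N \<le> t * D t powr (1/p)" using big[of N] unfolding D_def by blast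
      have "ennreal N \<le> ennreal (t * D t powr (1/p))" by (rule ennreal_leI[OF t(2)])
      also have "\<dots> = (if distr_fun \<Omega> g t = top then top
                        else ennreal (t * enn2real (distr_fun \<Omega> g t) powr (1/p)))"
        using fin by (simp add: D_def)
      also have "\<dots> \<le> (SUP t\<in>{0<..}. (if distr_fun \<Omega> g t = top then top
                        else ennreal (t * enn2real (distr_fun \<Omega> g t) powr (1/p))))"
        using t(1) by (intro SUP_upper) auto
      finally show "ennreal N \<le> \<dots>" .
    qed
    then show ?thesis using True unfolding lorentz_norm_def by simp
  next
    case False
    define qr where "qr = enn2real q"
    have qr1: "1 \<le> qr" unfolding qr_def using q False
      by (metis enn2real_ennreal enn2real_mono ennreal_1 less_top zero_le_one)
    define I where "I = (\<integral>\<^sup>+ t\<in>{0<..}.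
                   (if distr_fun \<Omega> g t = top then top
                    else ennreal ((t * enn2real (distr_fun \<Omega> g t) powr (1/p)) powr qr / t)) \<partial>lborel)"
    have "I = top"
    proof (rule unbounded_top)
      fix N0 :: real
      define N where "N = max 2 (4 * N0)"
      have N2: "N \<ge> 2" unfolding N_def by simp
      obtain t0 where t0: "t0 > 0" "N \<le> t0 * D t0 powr (1/p)" using big[of N] unfolding D_def by blast
      have pw: "ennreal (N / (2*t0)) * indicator {t0/2..t0} t
          \<le> (if distr_fun \<Omega> g t = top then top
              else ennreal ((t * enn2real (distr_fun \<Omega> g t) powr (1/p)) powr qr / t)) * indicator {0<..} t" for t
      proof (cases "t \<in> {t0/2..t0}")
        case False then show ?thesis by simp
      next
        case True
        then have tpos: "t > 0" and tt: "t0/2 \<le> t" "t \<le> t0" using t0 by auto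
        have "D t0 \<le> D t" using Dmono[of t t0] tpos tt by simp
        then have "D t0 powr (1/p) \<le> D t powr (1/p)" using D0 p by (intro powr_mono2) auto
        then have "(t0/2) * D t0 powr (1/p) \<le> t * D t powr (1/p)"
          using tt t0 by (intro mult_mono) auto
        moreover have "N/2 \<le> (t0/2) * D t0 powr (1/p)" using t0 by simp
        ultimately have b: "N/2 \<le> t * D t powr (1/p)" by linarith
        have "N/2 = (N/2) powr 1" using N2 by simp
        also have "\<dots> \<le> (N/2) powr qr" using N2 qr1 by (intro powr_mono) auto
        also have "\<dots> \<le> (t * D t powr (1/p)) powr qr" using b N2 qr1 by (intro powr_mono2) auto
        finally have c: "N/2 \<le> (t * D t powr (1/p)) powr qr" .
        have "N / (2*t0) \<le> (N/2) / t" using tt t0 N2 by (simp add: field_simps mult_left_mono)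
        also have "\<dots> \<le> (t * D t powr (1/p)) powr qr / t" by (rule divide_right_mono[OF c]) (use tpos in simp)
        finally have "ennreal (N / (2*t0)) \<le> ennreal ((t * D t powr (1/p)) powr qr / t)" by (rule ennreal_leI)
        then show ?thesis using tpos fin True by (simp add: D_def)
      qed
      have "ennreal N0 \<le> ennreal (N / (2*t0)) * ennreal (t0/2)"
        using t0 by (simp add: ennreal_mult'[symmetric] N_def ennreal_leI)
      also have "\<dots> = (\<integral>\<^sup>+ t. ennreal (N / (2*t0)) * indicator {t0/2..t0} t \<partial>lborel)"
        using t0 by (simp add: nn_integral_cmult_indicator)
      also have "\<dots> \<le> I" unfolding I_def by (rule nn_integral_mono) (rule pw)
      finally show "ennreal N0 \<le> I" .
    qed
    then show ?thesis using False unfolding lorentz_norm_def I_def qr_def by (simp add: Let_def)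
  qed
qed

lemma Fs_term_le:
  assumes "Fs a \<xi> y \<noteq> \<infinity>"
  shows "(1/2)^k * \<bar>y \<bullet> \<xi> - qs k\<bar> powr (-a) \<le> enn2real (Fs a \<xi> y)"
proof -
  define f where "f k = ennreal ((1/2)^k * \<bar>y \<bullet> \<xi> - qs k\<bar> powr (-a))" for k
  have "(\<Sum>i\<in>{k}. f i) \<le> (\<Sum>i. f i)" by (rule sum_le_suminf[OF summableI]) auto
  then have "f k \<le> Fs a \<xi> y" unfolding Fs_def f_def by simp
  then have "enn2real (f k) \<le> enn2real (Fs a \<xi> y)" using assms by (intro enn2real_mono) (auto simp: less_top)
  then show ?thesis unfolding f_def by simp
qed

lemma ex_qs_near:
  assumes "e > 0" shows "\<exists>k. \<bar>z - qs k\<bar> < e"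
proof -
  obtain v where v: "v \<in> \<rat>" "z - e < v" "v < z + e" using Rats_dense_in_real[of "z - e" "z + e"] assms by auto
  obtain k where "from_nat_into (\<rat>::real set) k = v" using from_nat_into_surj[OF countable_rat v(1)] by blast
  then have "qs k = v" by (simp add: qs_def)
  then show ?thesis using v by (intro exI[of _ k]) auto
qed

lemma powr_growth:
  fixes \<kappa> \<beta> p a C N :: real
  assumes k: "\<kappa> > 0" and b: "\<beta> > 0" and p: "p > 0" and a: "a > 0" and g1: "1/(a*p) < 1" and C: "C \<ge> 0"
  shows "\<exists>t0. \<forall>t\<ge>t0. N \<le> t * (\<kappa> * (\<beta>/(t + C + 1)) powr (1/a)) powr (1/p)"
proof -
  define \<gamma> where "\<gamma> = 1/(a*p)"
  have g0: "0 < \<gamma>" "\<gamma> < 1" unfolding \<gamma>_def using a p g1 by auto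
  define c1 where "c1 = \<kappa> powr (1/p) * (\<beta>/2) powr \<gamma>"
  have c1: "c1 > 0" unfolding c1_def using k b by simp
  define N' where "N' = max N 1"
  define t0 where "t0 = max (C+1) ((N'/c1) powr (1/(1-\<gamma>)))"
  have "N \<le> t * (\<kappa> * (\<beta>/(t + C + 1)) powr (1/a)) powr (1/p)" if t: "t \<ge> t0" for t
  proof -
    have tC: "t \<ge> C + 1" using t unfolding t0_def by simp
    have tpos: "t > 0" using tC C by simp
    define T where "T = t + C + 1"
    have T: "T > 0" "T \<le> 2*t" unfolding T_def using tC C by auto
    have "(\<kappa> * (\<beta>/T) powr (1/a)) powr (1/p) = \<kappa> powr (1/p) * (\<beta>/T) powr \<gamma>"
      using k b T by (simp add: powr_mult powr_powr \<gamma>_def)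
    also have "(\<beta>/T) powr \<gamma> \<ge> (\<beta>/(2*t)) powr \<gamma>"
      using T b g0 tpos by (intro powr_mono2) (auto simp: frac_le)
    then have "\<kappa> powr (1/p) * (\<beta>/T) powr \<gamma> \<ge> \<kappa> powr (1/p) * (\<beta>/(2*t)) powr \<gamma>"
      by (intro mult_left_mono) auto
    finally have A: "(\<kappa> * (\<beta>/T) powr (1/a)) powr (1/p) \<ge> \<kappa> powr (1/p) * (\<beta>/(2*t)) powr \<gamma>" .
    have "(\<beta>/(2*t)) powr \<gamma> = (\<beta>/2) powr \<gamma> * t powr (-\<gamma>)"
    proof -
      have "\<beta>/(2*t) = (\<beta>/2) * (1/t)" by simp
      then have "(\<beta>/(2*t)) powr \<gamma> = (\<beta>/2) powr \<gamma> * (1/t) powr \<gamma>"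
        using b tpos powr_mult[of "\<beta>/2" "1/t" \<gamma>] by simp
      also have "(1/t) powr \<gamma> = t powr (-\<gamma>)" using tpos by (simp add: powr_minus_divide powr_divide)
      finally show ?thesis .
    qed
    then have "t * (\<kappa> * (\<beta>/T) powr (1/a)) powr (1/p) \<ge> t * (c1 * t powr (-\<gamma>))"
      using A tpos unfolding c1_def by (intro mult_left_mono) (auto simp: mult.assoc)
    also have "t * (c1 * t powr (-\<gamma>)) = c1 * t powr (1 - \<gamma>)"
    proof -
      have "t * t powr (-\<gamma>) = t powr 1 * t powr (-\<gamma>)" using tpos by simp
      also have "\<dots> = t powr (1 - \<gamma>)" by (subst powr_add[symmetric]) simp
      finally show ?thesis by (simp add: algebra_simps)
    qed
    finally have B: "c1 * t powr (1 - \<gamma>) \<le> t * (\<kappa> * (\<beta>/T) powr (1/a)) powr (1/p)" .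
    have "t \<ge> (N'/c1) powr (1/(1-\<gamma>))" using t unfolding t0_def by simp
    then have "t powr (1-\<gamma>) \<ge> ((N'/c1) powr (1/(1-\<gamma>))) powr (1-\<gamma>)"
      using g0 by (intro powr_mono2) auto
    also have "((N'/c1) powr (1/(1-\<gamma>))) powr (1-\<gamma>) = N'/c1"
      using g0 c1 by (simp add: powr_powr N'_def)
    finally have "N'/c1 \<le> t powr (1-\<gamma>)" .
    then have "N' \<le> c1 * t powr (1-\<gamma>)" using c1 by (simp add: field_simps)
    then show ?thesis using B unfolding T_def N'_def by linarith
  qed
  then show ?thesis by blast
qed

lemma core_top:
  fixes \<xi> x :: "'n::euclidean_space" and w a0 :: "'v::euclidean_space" and M :: "'n \<Rightarrow> 'v"
  assumes xi: "norm \<xi> = 1" and w: "w \<noteq> 0" and p: "p > 1" and a: "1/p < a" "a < 1"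
    and r: "r > 0" and M: "linear M" and q: "1 \<le> q"
  shows "lorentz_norm p q (ball x r) (\<lambda>y. enn2real (Fs a \<xi> y) *\<^sub>R w - (a0 + M (y - x))) = top"
proof -
  define g where "g = (\<lambda>y. enn2real (Fs a \<xi> y) *\<^sub>R w - (a0 + M (y - x)))"
  have a0': "a > 0" using a p by (smt (verit) divide_pos_pos)
  have Mb[measurable]: "M \<in> borel_measurable borel"
    by (rule borel_measurable_continuous_onI, rule linear_continuous_on) (use M linear_conv_bounded_linear in auto)
  have "g \<in> borel_measurable lborel" unfolding g_def by measurable
  then have gm: "g \<in> borel_measurable lebesgue" by (rule measurable_completion)
  have ballS: "ball x r \<in> sets lebesgue" by (simp add: fmeasurable_def)
  have Sset: "{y \<in> ball x r. norm (g y) > t} \<in> sets lebesgue" for t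
  proof -
    have "(\<lambda>y. norm (g y)) -` {t<..} \<inter> space lebesgue \<in> sets lebesgue"
      by (rule measurable_sets[OF measurable_compose[OF gm borel_measurable_norm]]) simp
    then have "ball x r \<inter> ((\<lambda>y. norm (g y)) -` {t<..} \<inter> space lebesgue) \<in> sets lebesgue"
      using ballS by blast
    moreover have "ball x r \<inter> ((\<lambda>y. norm (g y)) -` {t<..} \<inter> space lebesgue) = {y \<in> ball x r. norm (g y) > t}"
      by auto
    ultimately show ?thesis by simp
  qed
  have fin: "distr_fun (ball x r) g t \<noteq> top" for t
  proof -
    have "distr_fun (ball x r) g t \<le> emeasure lebesgue (ball x r)"
      unfolding distr_fun_def by (rule emeasure_mono) (use ballS in auto)
    also have "\<dots> < top" by (simp add: emeasure_eq_measure2)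
    finally show ?thesis by simp
  qed
  have mono: "distr_fun (ball x r) g t \<le> distr_fun (ball x r) g s" if "0 < s" "s \<le> t" for s t
    unfolding distr_fun_def by (rule emeasure_mono) (use Sset that in auto)
  have big: "\<exists>t>0. N \<le> t * enn2real (distr_fun (ball x r) g t) powr (1/p)" for N
  proof -
    obtain K where K: "K > 0" "\<And>z. norm (M z) \<le> K * norm z" using linear_bounded_pos[OF M] by blast
    define C where "C = norm a0 + K * r"
    have C0: "C \<ge> 0" unfolding C_def using K r by simp
    have Cb: "norm (a0 + M (y - x)) \<le> C" if "y \<in> ball x r" for y
    proof -
      have "norm (a0 + M (y - x)) \<le> norm a0 + norm (M (y - x))" by (rule norm_triangle_ineq)
      also have "norm (M (y - x)) \<le> K * norm (y - x)" by (rule K(2))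
      also have "K * norm (y - x) \<le> K * r" using that K by (intro mult_left_mono) (auto simp: dist_norm norm_minus_commute)
      finally show ?thesis unfolding C_def by simp
    qed
    obtain k where k: "\<bar>x \<bullet> \<xi> - qs k\<bar> < r/4" using ex_qs_near[of "r/4" "x \<bullet> \<xi>"] r by auto
    define c where "c = qs k"
    define \<beta> where "\<beta> = (1/2)^k * norm w"
    have b0: "\<beta> > 0" unfolding \<beta>_def using w by simp
    define G where "G = measure lebesgue (ball x (r/4))"
    have G0: "G > 0" unfolding G_def using measure_ball_pos[of "r/4" x] r by simp
    define \<kappa> where "\<kappa> = G * 2 / (3 * r)"
    have k0: "\<kappa> > 0" unfolding \<kappa>_def using G0 r by simp
    have g1: "1/(a*p) < 1" using a p by (simp add: field_simps)
    obtain t0 where t0: "\<And>t. t \<ge> t0 \<Longrightarrow> N \<le> t * (\<kappa> * (\<beta>/(t + C + 1)) powr (1/a)) powr (1/p)"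
      using powr_growth[OF k0 b0 _ a0' g1 C0, of N] p by auto
    define t\<delta> where "t\<delta> = \<beta> / (r/4) powr a"
    define t where "t = max t0 (max (C+1) t\<delta>)"
    define T where "T = t + C + 1"
    define \<delta> where "\<delta> = (\<beta>/T) powr (1/a)"
    have tpos: "t > 0" unfolding t_def using C0 by simp
    have Tpos: "T > 0" unfolding T_def using tpos C0 by simp
    have d0: "\<delta> > 0" unfolding \<delta>_def using b0 Tpos by simp
    have dr: "\<delta> \<le> r/4"
    proof -
      have "T \<ge> t\<delta>" unfolding T_def t_def using C0 by simp
      moreover have "t\<delta> > 0" unfolding t\<delta>_def using b0 r by simp
      ultimately have "\<beta>/T \<le> \<beta>/t\<delta>" using b0 Tpos by (intro divide_left_mono) auto
      also have "\<beta>/t\<delta> = (r/4) powr a" unfolding t\<delta>_def using b0 r by simp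
      finally have "(\<beta>/T) powr (1/a) \<le> ((r/4) powr a) powr (1/a)"
        using b0 Tpos a0' by (intro powr_mono2) auto
      also have "\<dots> = r/4" using r a0' by (simp add: powr_powr)
      finally show ?thesis unfolding \<delta>_def .
    qed
    have dpow: "\<delta> powr (-a) = T / \<beta>"
    proof -
      have "\<delta> powr (-a) = (\<beta>/T) powr (1/a * -a)" unfolding \<delta>_def by (simp add: powr_powr)
      also have "1/a * -a = -1" using a0' by simp
      finally show ?thesis using b0 Tpos by (simp add: powr_minus_divide)
    qed
    have xc: "\<bar>x \<bullet> \<xi> - c\<bar> \<le> r/4" using k unfolding c_def by simp
    have AEfin: "AE y in lebesgue. y \<in> ball 0 (norm x + r) \<longrightarrow> Fs a \<xi> y \<noteq> \<infinity>"
    proof -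
      have "norm x + r > 0" using r by (simp add: add_nonneg_pos)
      then show ?thesis using Fs_AE_finite[OF xi _ a0' a(2), of "norm x + r"] by blast
    qed
    have incl: "AE y in lebesgue. y \<in> ball x r \<inter> {y. c < y \<bullet> \<xi> \<and> y \<bullet> \<xi> \<le> c + \<delta>}
                  \<longrightarrow> y \<in> {y \<in> ball x r. norm (g y) > t}"
      using AEfin
    proof eventually_elim
      case (elim y)
      show ?case
      proof
        assume y: "y \<in> ball x r \<inter> {y. c < y \<bullet> \<xi> \<and> y \<bullet> \<xi> \<le> c + \<delta>}"
        have "norm y \<le> norm x + norm (y - x)" using norm_triangle_ineq[of x "y - x"] by simp
        moreover have "norm (y - x) < r" using y by (simp add: dist_norm norm_minus_commute)
        ultimately have "y \<in> ball 0 (norm x + r)" by simp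
        then have Ffin: "Fs a \<xi> y \<noteq> \<infinity>" using elim by blast
        define s where "s = y \<bullet> \<xi> - c"
        have s: "0 < s" "s \<le> \<delta>" using y unfolding s_def by auto
        have "\<delta> powr (-a) \<le> \<bar>s\<bar> powr (-a)" using s a0' by (intro powr_mono2') auto
        then have "T/\<beta> \<le> \<bar>s\<bar> powr (-a)" using dpow by simp
        then have "(1/2)^k * (T/\<beta>) \<le> (1/2)^k * \<bar>s\<bar> powr (-a)" by (rule mult_left_mono) simp
        also have "\<dots> \<le> enn2real (Fs a \<xi> y)" using Fs_term_le[OF Ffin, of k] unfolding s_def c_def .
        finally have "(1/2)^k * (T/\<beta>) * norm w \<le> enn2real (Fs a \<xi> y) * norm w"
          by (intro mult_right_mono) auto
        moreover have "(1/2)^k * (T/\<beta>) * norm w = T" unfolding \<beta>_def using w by simp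
        ultimately have "T \<le> norm (enn2real (Fs a \<xi> y) *\<^sub>R w)" by simp
        moreover have "norm (enn2real (Fs a \<xi> y) *\<^sub>R w) - norm (a0 + M (y - x)) \<le> norm (g y)"
          unfolding g_def by (rule norm_triangle_ineq2)
        moreover have "norm (a0 + M (y - x)) \<le> C" using Cb y by blast
        ultimately have "norm (g y) > t" unfolding T_def by linarith
        then show "y \<in> {y \<in> ball x r. norm (g y) > t}" using y by blast
      qed
    qed
    have "ennreal (G * (2*\<delta>/(3*r))) \<le> emeasure lebesgue (ball x r \<inter> {y. c < y \<bullet> \<xi> \<and> y \<bullet> \<xi> \<le> c + \<delta>})"
      unfolding G_def by (rule slab_lower[OF xi r d0 dr xc])
    also have "\<dots> \<le> distr_fun (ball x r) g t"
      unfolding distr_fun_def by (rule emeasure_mono_AE[OF incl Sset])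
    finally have "ennreal (\<kappa> * \<delta>) \<le> distr_fun (ball x r) g t" unfolding \<kappa>_def by (simp add: field_simps)
    then have kd: "\<kappa> * \<delta> \<le> enn2real (distr_fun (ball x r) g t)"
      using fin[of t] k0 d0 by (metis enn2real_ennreal enn2real_mono less_top mult_nonneg_nonneg less_imp_le)
    have "N \<le> t * (\<kappa> * \<delta>) powr (1/p)" using t0[of t] unfolding t_def \<delta>_def T_def by simp
    also have "\<dots> \<le> t * enn2real (distr_fun (ball x r) g t) powr (1/p)"
      using kd k0 d0 tpos p by (intro mult_left_mono powr_mono2) auto
    finally show ?thesis using tpos by blast
  qed
  show ?thesis unfolding g_def[symmetric]
    by (rule lorentz_top_generic[OF fin mono big]) (use p q in auto)
qed

abbreviation Dfr :: "('n::euclidean_space \<Rightarrow> real) \<Rightarrow> 'n \<Rightarrow> 'n \<Rightarrow> real" where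
  "Dfr \<phi> x \<equiv> frechet_derivative \<phi> (at x)"

lemma tf_deriv: "test_function \<phi> \<Longrightarrow> (\<phi> has_derivative Dfr \<phi> x) (at x)"
proof -
  assume "test_function \<phi>"
  then have "Ck 1 \<phi>" unfolding test_function_def by blast
  then have "\<phi> differentiable (at x)" by simp
  then show ?thesis by (simp add: frechet_derivative_works)
qed

lemma tf_cont: assumes "test_function \<phi>" shows "continuous_on UNIV \<phi>"
  using has_derivative_continuous[OF tf_deriv[OF assms]] by (intro continuous_at_imp_continuous_on) auto

lemma tf_lin: "test_function \<phi> \<Longrightarrow> linear (Dfr \<phi> x)"
  using tf_deriv has_derivative_linear by blast

lemma tf_dexp: "test_function \<phi> \<Longrightarrow> Dfr \<phi> x e = (\<Sum>i\<in>Basis. (e \<bullet> i) * Dfr \<phi> x i)"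
proof -
  assume tf: "test_function \<phi>"
  have "Dfr \<phi> x e = Dfr \<phi> x (\<Sum>i\<in>Basis. (e \<bullet> i) *\<^sub>R i)" by (simp add: euclidean_representation)
  also have "\<dots> = (\<Sum>i\<in>Basis. Dfr \<phi> x ((e \<bullet> i) *\<^sub>R i))" by (rule linear_sum[OF tf_lin[OF tf]])
  also have "\<dots> = (\<Sum>i\<in>Basis. (e \<bullet> i) * Dfr \<phi> x i)"
    by (rule sum.cong) (auto simp: linear_scale[OF tf_lin[OF tf]])
  finally show ?thesis .
qed

lemma tf_dcont: "test_function \<phi> \<Longrightarrow> continuous_on UNIV (\<lambda>x. Dfr \<phi> x e)"
proof -
  assume tf: "test_function \<phi>"
  then have "Ck 1 \<phi>" unfolding test_function_def by blast
  then have c: "\<And>i. i \<in> Basis \<Longrightarrow> continuous_on UNIV (\<lambda>x. Dfr \<phi> x i)" by simp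
  have "continuous_on UNIV (\<lambda>x. \<Sum>i\<in>Basis. (e \<bullet> i) * Dfr \<phi> x i)"
    by (intro continuous_intros c)
  moreover have "(\<lambda>x. Dfr \<phi> x e) = (\<lambda>x. \<Sum>i\<in>Basis. (e \<bullet> i) * Dfr \<phi> x i)"
    by (rule ext) (rule tf_dexp[OF tf])
  ultimately show ?thesis by metis
qed

lemma tf_supp: "test_function \<phi> \<Longrightarrow> compact (closure {x. \<phi> x \<noteq> 0})"
  unfolding test_function_def by blast

lemma tf_out:
  assumes tf: "test_function \<phi>" and x: "x \<notin> closure {x. \<phi> x \<noteq> 0}"
  shows "\<phi> x = 0" "Dfr \<phi> x e = 0"
proof -
  show "\<phi> x = 0" using x closure_subset[of "{x. \<phi> x \<noteq> 0}"] by auto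
  define U where "U = - closure {x. \<phi> x \<noteq> 0}"
  have U: "open U" "x \<in> U" using x unfolding U_def by auto
  have z: "\<phi> y = 0" if "y \<in> U" for y using that closure_subset[of "{x. \<phi> x \<noteq> 0}"] unfolding U_def by auto
  have "((\<lambda>_. 0::real) has_derivative (\<lambda>_. 0)) (at x)" by simp
  then have "(\<phi> has_derivative (\<lambda>_. 0)) (at x)"
    by (rule has_derivative_transform_within_open[OF _ U]) (simp add: z)
  then have "(\<lambda>_. 0) = Dfr \<phi> x" by (rule frechet_derivative_at)
  then show "Dfr \<phi> x e = 0" by (simp add: fun_eq_iff)
qed

lemma bounded_supp_fun:
  fixes h :: "'n::euclidean_space \<Rightarrow> real"
  assumes c: "continuous_on UNIV h" and S: "compact S" and z: "\<And>x. x \<notin> S \<Longrightarrow> h x = 0"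
  shows "\<exists>L\<ge>0. \<forall>x. \<bar>h x\<bar> \<le> L"
proof -
  have "compact (h ` S)" by (rule compact_continuous_image[OF continuous_on_subset[OF c] S]) auto
  then have "bounded (h ` S)" by (rule compact_imp_bounded)
  then obtain L where L: "\<forall>y\<in>h ` S. norm y \<le> L" unfolding bounded_iff by blast
  have "\<bar>h x\<bar> \<le> max L 0" for x
    using L z[of x] by (cases "x \<in> S") auto
  then show ?thesis by (intro exI[of _ "max L 0"]) auto
qed

lemma tf_bound: assumes "test_function \<phi>" shows "\<exists>L\<ge>0. \<forall>x. \<bar>\<phi> x\<bar> \<le> L"
  by (rule bounded_supp_fun[OF tf_cont[OF assms] tf_supp[OF assms]]) (rule tf_out(1)[OF assms])

lemma tf_dbound: assumes "test_function \<phi>" shows "\<exists>L\<ge>0. \<forall>x. \<bar>Dfr \<phi> x e\<bar> \<le> L"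
  by (rule bounded_supp_fun[OF tf_dcont[OF assms] tf_supp[OF assms]]) (rule tf_out(2)[OF assms])

lemma tf_line_deriv:
  assumes tf: "test_function \<phi>"
  shows "((\<lambda>t. \<phi> (x + t *\<^sub>R e)) has_real_derivative Dfr \<phi> (x + t *\<^sub>R e) e) (at t)"
proof -
  have d1: "((\<lambda>t. x + t *\<^sub>R e) has_derivative (\<lambda>h. h *\<^sub>R e)) (at t)"
    by (auto intro!: derivative_eq_intros)
  have "((\<lambda>t. \<phi> (x + t *\<^sub>R e)) has_derivative (\<lambda>h. Dfr \<phi> (x + t *\<^sub>R e) (h *\<^sub>R e))) (at t)"
    by (rule has_derivative_compose[OF d1 tf_deriv[OF tf]])
  moreover have "(\<lambda>h. Dfr \<phi> (x + t *\<^sub>R e) (h *\<^sub>R e)) = (*) (Dfr \<phi> (x + t *\<^sub>R e) e)"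
    by (auto simp: linear_scale[OF tf_lin[OF tf]])
  ultimately show ?thesis by (simp add: has_field_derivative_def)
qed

lemma tf_lip:
  assumes tf: "test_function \<phi>" and L: "\<And>y. \<bar>Dfr \<phi> y e\<bar> \<le> L"
  shows "\<bar>\<phi> (x + s *\<^sub>R e) - \<phi> x\<bar> \<le> L * \<bar>s\<bar>"
proof (cases "s = 0")
  case True then show ?thesis by simp
next
  case False
  define \<psi> where "\<psi> t = \<phi> (x + t *\<^sub>R e)" for t
  have der: "\<And>t. DERIV \<psi> t :> Dfr \<phi> (x + t *\<^sub>R e) e" unfolding \<psi>_def by (rule tf_line_deriv[OF tf])
  have "\<exists>z. \<bar>\<psi> s - \<psi> 0\<bar> = \<bar>s\<bar> * \<bar>Dfr \<phi> (x + z *\<^sub>R e) e\<bar>"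
  proof (cases "s > 0")
    case True
    from MVT2[OF True der] obtain z where "\<psi> s - \<psi> 0 = (s - 0) * Dfr \<phi> (x + z *\<^sub>R e) e" by blast
    then show ?thesis by (auto simp: abs_mult)
  next
    case False
    with \<open>s \<noteq> 0\<close> have "s < 0" by simp
    from MVT2[OF this der] obtain z where "\<psi> 0 - \<psi> s = (0 - s) * Dfr \<phi> (x + z *\<^sub>R e) e" by blast
    then have "\<bar>\<psi> s - \<psi> 0\<bar> = \<bar>s\<bar> * \<bar>Dfr \<phi> (x + z *\<^sub>R e) e\<bar>" by (auto simp: abs_mult abs_minus_commute)
    then show ?thesis by blast
  qed
  then obtain z where z: "\<bar>\<psi> s - \<psi> 0\<bar> = \<bar>s\<bar> * \<bar>Dfr \<phi> (x + z *\<^sub>R e) e\<bar>" by blast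
  also have "\<dots> \<le> \<bar>s\<bar> * L" by (rule mult_left_mono[OF L]) simp
  finally show ?thesis unfolding \<psi>_def by (simp add: mult.commute)
qed

lemma transl_integral:
  fixes H :: "'n::euclidean_space \<Rightarrow> real"
  assumes Hm: "H \<in> borel_measurable borel" and Hi: "integrable lborel H"
  shows "integrable lborel (\<lambda>x. H (c + x))" "(\<integral>x. H (c + x) \<partial>lborel) = (\<integral>x. H x \<partial>lborel)"
proof -
  have T: "(+) c \<in> measurable lborel borel" by simp
  have Hm': "H \<in> borel_measurable borel" by (rule Hm)
  show "integrable lborel (\<lambda>x. H (c + x))"
    using integrable_distr_eq[OF T Hm'] Hi lborel_distr_plus[of c] by simp
  show "(\<integral>x. H (c + x) \<partial>lborel) = (\<integral>x. H x \<partial>lborel)"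
    using integral_distr[OF T Hm'] lborel_distr_plus[of c] by simp
qed

lemma dist_zero:
  fixes f :: "'n::euclidean_space \<Rightarrow> real" and \<phi> :: "'n \<Rightarrow> real" and e :: 'n
  assumes fm: "f \<in> borel_measurable borel"
    and fi: "\<And>K. compact K \<Longrightarrow> integrable lborel (\<lambda>x. indicator K x * f x)"
    and finv: "\<And>x s. f (x + s *\<^sub>R e) = f x"
    and tf: "test_function \<phi>"
  shows "(\<integral>x. f x * Dfr \<phi> x e \<partial>lborel) = 0"
proof -
  define S where "S = closure {x. \<phi> x \<noteq> 0}"
  have Sc: "compact S" unfolding S_def by (rule tf_supp[OF tf])
  obtain Rs where Rs: "Rs > 0" "\<And>x. x \<in> S \<Longrightarrow> norm x \<le> Rs"
    using compact_imp_bounded[OF Sc] bounded_pos by metis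
  define K where "K = cball (0::'n) (Rs + norm e)"
  have Kc: "compact K" unfolding K_def by simp
  obtain L\<phi> where L\<phi>: "L\<phi> \<ge> 0" "\<And>x. \<bar>\<phi> x\<bar> \<le> L\<phi>" using tf_bound[OF tf] by blast
  obtain Le where Le: "Le \<ge> 0" "\<And>x. \<bar>Dfr \<phi> x e\<bar> \<le> Le" using tf_dbound[OF tf] by blast
  have out: "\<phi> x = 0" if "x \<notin> S" for x using tf_out(1)[OF tf] that unfolding S_def by blast
  have \<phi>m[measurable]: "\<phi> \<in> borel_measurable borel"
    by (rule borel_measurable_continuous_onI[OF tf_cont[OF tf]])
  have Dm[measurable]: "(\<lambda>x. Dfr \<phi> x e) \<in> borel_measurable borel"
    by (rule borel_measurable_continuous_onI[OF tf_dcont[OF tf]])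
  have fm'[measurable]: "f \<in> borel_measurable borel" by (rule fm)
  define H where "H x = f x * \<phi> x" for x
  have Hm[measurable]: "H \<in> borel_measurable borel" unfolding H_def by measurable
  have fS: "integrable lborel (\<lambda>x. indicator S x * f x)" by (rule fi[OF Sc])
  have Hi: "integrable lborel H"
  proof (rule Bochner_Integration.integrable_bound[OF integrable_mult_right[of L\<phi>, OF fS]])
    show "H \<in> borel_measurable lborel" by simp
    show "AE x in lborel. norm (H x) \<le> norm (L\<phi> * (indicator S x * f x))"
    proof (rule AE_I2)
      fix x show "norm (H x) \<le> norm (L\<phi> * (indicator S x * f x))"
        using L\<phi> out[of x] mult_left_mono[OF L\<phi>(2)[of x] abs_ge_zero[of "f x"]]
        by (cases "x \<in> S") (auto simp: H_def abs_mult mult.commute)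
    qed
  qed
  define s where "s n = inverse (real (Suc n))" for n
  have s0: "s n > 0" "s n \<le> 1" for n unfolding s_def by (auto simp: field_simps)
  define Q where "Q n x = f x * ((\<phi> (x + s n *\<^sub>R e) - \<phi> x) / s n)" for n x
  have Qeq: "Q n x = (H (s n *\<^sub>R e + x) - H x) / s n" for n x
    unfolding Q_def H_def using finv[of x "s n"] by (simp add: add.commute algebra_simps diff_divide_distrib)
  have Qint: "(\<integral>x. Q n x \<partial>lborel) = 0" for n
  proof -
    note tr = transl_integral[OF Hm Hi, of "s n *\<^sub>R e"]
    have "(\<integral>x. Q n x \<partial>lborel) = (\<integral>x. (H (s n *\<^sub>R e + x) - H x) / s n \<partial>lborel)"
      by (simp add: Qeq)
    also have "\<dots> = (\<integral>x. (H (s n *\<^sub>R e + x) - H x) \<partial>lborel) / s n"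
      by (rule integral_divide_zero)
    also have "(\<integral>x. (H (s n *\<^sub>R e + x) - H x) \<partial>lborel) = 0"
      using tr Hi by simp
    finally show ?thesis by simp
  qed
  have Qm: "Q n \<in> borel_measurable lborel" for n unfolding Q_def by measurable
  have limm: "(\<lambda>x. f x * Dfr \<phi> x e) \<in> borel_measurable lborel" by measurable
  define w where "w x = Le * \<bar>indicator K x * f x\<bar>" for x
  have wi: "integrable lborel w" unfolding w_def
    using fi[OF Kc] by (intro integrable_mult_right integrable_abs) auto
  have bound: "AE x in lborel. norm (Q n x) \<le> w x" for n
  proof (rule AE_I2)
    fix x
    show "norm (Q n x) \<le> w x"
    proof (cases "x \<in> K")
      case True
      have "\<bar>\<phi> (x + s n *\<^sub>R e) - \<phi> x\<bar> \<le> Le * \<bar>s n\<bar>" by (rule tf_lip[OF tf Le(2)])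
      then have "\<bar>(\<phi> (x + s n *\<^sub>R e) - \<phi> x) / s n\<bar> \<le> Le" using s0[of n] by (simp add: field_simps)
      then have "\<bar>f x\<bar> * \<bar>(\<phi> (x + s n *\<^sub>R e) - \<phi> x) / s n\<bar> \<le> \<bar>f x\<bar> * Le" by (rule mult_left_mono) simp
      then show ?thesis using True unfolding Q_def w_def by (simp add: abs_mult mult.commute)
    next
      case False
      then have xn: "norm x > Rs + norm e" unfolding K_def by simp
      have "x \<notin> S" using Rs(2)[of x] xn by (smt (verit) norm_ge_zero)
      moreover have "x + s n *\<^sub>R e \<notin> S"
      proof
        assume "x + s n *\<^sub>R e \<in> S"
        then have "norm (x + s n *\<^sub>R e) \<le> Rs" by (rule Rs(2))
        moreover have "norm x \<le> norm (x + s n *\<^sub>R e) + norm (s n *\<^sub>R e)"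
          using norm_triangle_ineq4[of "x + s n *\<^sub>R e" "s n *\<^sub>R e"] by simp
        moreover have "norm (s n *\<^sub>R e) \<le> norm e" using s0[of n] by (simp add: mult_left_le_one_le)
        ultimately show False using xn by linarith
      qed
      ultimately show ?thesis using out Le(1) unfolding Q_def w_def by simp
    qed
  qed
  have lim: "AE x in lborel. (\<lambda>n. Q n x) \<longlonglongrightarrow> f x * Dfr \<phi> x e"
  proof (rule AE_I2)
    fix x
    have "((\<lambda>t. \<phi> (x + t *\<^sub>R e)) has_real_derivative Dfr \<phi> (x + 0 *\<^sub>R e) e) (at 0)"
      by (rule tf_line_deriv[OF tf])
    then have "((\<lambda>t. (\<phi> (x + t *\<^sub>R e) - \<phi> (x + 0 *\<^sub>R e)) / (t - 0)) \<longlongrightarrow> Dfr \<phi> x e) (at 0)"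
      unfolding has_field_derivative_iff by simp
    then have l1: "((\<lambda>t. (\<phi> (x + t *\<^sub>R e) - \<phi> x) / t) \<longlongrightarrow> Dfr \<phi> x e) (at 0)" by simp
    have sl: "filterlim s (at 0) sequentially"
      unfolding filterlim_at using s0 LIMSEQ_inverse_real_of_nat unfolding s_def
      by (auto intro!: always_eventually)
    have "((\<lambda>n. (\<phi> (x + s n *\<^sub>R e) - \<phi> x) / s n) \<longlongrightarrow> Dfr \<phi> x e) sequentially"
      using filterlim_compose[OF l1 sl] by simp
    then show "(\<lambda>n. Q n x) \<longlonglongrightarrow> f x * Dfr \<phi> x e" unfolding Q_def by (rule tendsto_mult_left)
  qed
  have "(\<lambda>n. \<integral>x. Q n x \<partial>lborel) \<longlonglongrightarrow> (\<integral>x. f x * Dfr \<phi> x e \<partial>lborel)"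
    by (rule integral_dominated_convergence[OF limm Qm wi lim bound])
  then have "(\<lambda>n. 0::real) \<longlonglongrightarrow> (\<integral>x. f x * Dfr \<phi> x e \<partial>lborel)" by (simp add: Qint)
  then show ?thesis using LIMSEQ_unique[OF tendsto_const] by metis
qed

lemma f_L1:
  fixes \<xi> :: "'n::euclidean_space"
  assumes xi: "norm \<xi> = 1" and a: "0 < a" "a < 1" and K: "compact K"
  shows "integrable lborel (\<lambda>x. indicator K x * enn2real (Fs a \<xi> x))"
proof -
  obtain R where R: "R > 0" "K \<subseteq> ball 0 R"
    using compact_imp_bounded[OF K] bounded_subset_ballD by blast
  have Kb[measurable]: "K \<in> sets borel" using K by (intro borel_closed compact_imp_closed)
  show ?thesis
  proof (rule integrableI_bounded)
    show "(\<lambda>x. indicator K x * enn2real (Fs a \<xi> x)) \<in> borel_measurable lborel" by measurable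
    have "(\<integral>\<^sup>+x. ennreal (norm (indicator K x * enn2real (Fs a \<xi> x))) \<partial>lborel)
        \<le> (\<integral>\<^sup>+x. Fs a \<xi> x * indicator (ball 0 R) x \<partial>lborel)"
    proof (rule nn_integral_mono)
      fix x
      show "ennreal (norm (indicator K x * enn2real (Fs a \<xi> x))) \<le> Fs a \<xi> x * indicator (ball 0 R) x"
      proof (cases "x \<in> K")
        case False then show ?thesis by simp
      next
        case True
        then have xb: "x \<in> ball 0 R" using R by auto
        have "ennreal (norm (indicator K x * enn2real (Fs a \<xi> x))) = ennreal (enn2real (Fs a \<xi> x))"
          using True by simp
        also have "\<dots> \<le> Fs a \<xi> x" by (simp add: ennreal_enn2real_if)
        finally show ?thesis using xb by simp
      qed
    qed
    also have "\<dots> = (\<integral>\<^sup>+x. Fs a \<xi> x * indicator (ball 0 R) x \<partial>lebesgue)"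
      by (simp add: nn_integral_completion)
    also have "\<dots> < \<infinity>" by (rule Fs_int[OF xi R(1) a])
    finally show "(\<integral>\<^sup>+x. ennreal (norm (indicator K x * enn2real (Fs a \<xi> x))) \<partial>lborel) < \<infinity>" .
  qed
qed

lemma integrable_supp_bound:
  fixes f h :: "'n::euclidean_space \<Rightarrow> real"
  assumes fS: "integrable lborel (\<lambda>x. indicator S x * f x)"
    and hm: "h \<in> borel_measurable borel" and fm: "f \<in> borel_measurable borel"
    and L: "\<And>x. \<bar>h x\<bar> \<le> L" and z: "\<And>x. x \<notin> S \<Longrightarrow> h x = 0"
  shows "integrable lborel (\<lambda>x. f x * h x)"
proof (rule Bochner_Integration.integrable_bound[OF integrable_mult_right[of L, OF fS]])
  show "(\<lambda>x. f x * h x) \<in> borel_measurable lborel" using hm fm by measurable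
  show "AE x in lborel. norm (f x * h x) \<le> norm (L * (indicator S x * f x))"
  proof (rule AE_I2)
    fix x
    have L0: "L \<ge> 0" using L[of x] by linarith
    show "norm (f x * h x) \<le> norm (L * (indicator S x * f x))"
      using z[of x] L0 mult_left_mono[OF L[of x] abs_ge_zero[of "f x"]]
      by (cases "x \<in> S") (auto simp: abs_mult mult.commute)
  qed
qed

lemma BVA_u:
  fixes B :: "'v::euclidean_space \<Rightarrow> 'n::euclidean_space \<Rightarrow> 'w::euclidean_space"
    and \<xi> :: 'n and w :: 'v
  assumes bil: "bilinear B" and xi: "norm \<xi> = 1" and Bw: "B w \<xi> = 0" and a: "0 < a" "a < 1"
  shows "BVA_loc B (\<lambda>y. enn2real (Fs a \<xi> y) *\<^sub>R w)"
  unfolding BVA_loc_def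
proof (intro conjI)
  show "L1_loc (\<lambda>y. enn2real (Fs a \<xi> y) *\<^sub>R w)" by (rule u_L1loc[OF xi a])
  define f where "f y = enn2real (Fs a \<xi> y)" for y
  have fm[measurable]: "f \<in> borel_measurable borel" unfolding f_def by measurable
  have fi: "integrable lborel (\<lambda>x. indicator K x * f x)" if "compact K" for K
    unfolding f_def by (rule f_L1[OF xi a that])
  have finv: "f (x + s *\<^sub>R e) = f x" if "e \<bullet> \<xi> = 0" for x s e
    unfolding f_def Fs_def using that by (simp add: inner_add_left)
  have linB: "linear (B w)" using bil unfolding bilinear_def by blast
  have W: "W_radon (null_measure lborel) (\<lambda>_. 0::'w)"
    unfolding W_radon_def by simp
  have key: "(\<Sum>j\<in>Basis. \<integral>x. frechet_derivative \<phi> (at x) j *\<^sub>R B (enn2real (Fs a \<xi> x) *\<^sub>R w) j \<partial>lebesgue) = 0"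
    if tf: "test_function \<phi>" for \<phi>
  proof -
    define S where "S = closure {x. \<phi> x \<noteq> 0}"
    have Sc: "compact S" unfolding S_def by (rule tf_supp[OF tf])
    have Dm[measurable]: "(\<lambda>x. Dfr \<phi> x e) \<in> borel_measurable borel" for e
      by (rule borel_measurable_continuous_onI[OF tf_dcont[OF tf]])
    have intD: "integrable lborel (\<lambda>x. f x * Dfr \<phi> x e)" for e
    proof -
      obtain L where L: "\<And>x. \<bar>Dfr \<phi> x e\<bar> \<le> L" using tf_dbound[OF tf, of e] by blast
      show ?thesis
        by (rule integrable_supp_bound[OF fi[OF Sc] Dm fm L]) (use tf_out(2)[OF tf] S_def in auto)
    qed
    define c where "c j = (\<integral>x. f x * Dfr \<phi> x j \<partial>lborel)" for j
    define I where "I = (\<Sum>j\<in>Basis. c j *\<^sub>R j)"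
    have termj: "(\<integral>x. frechet_derivative \<phi> (at x) j *\<^sub>R B (enn2real (Fs a \<xi> x) *\<^sub>R w) j \<partial>lebesgue) = c j *\<^sub>R B w j" for j
    proof -
      have "(\<integral>x. frechet_derivative \<phi> (at x) j *\<^sub>R B (enn2real (Fs a \<xi> x) *\<^sub>R w) j \<partial>lebesgue)
          = (\<integral>x. (f x * Dfr \<phi> x j) *\<^sub>R B w j \<partial>lebesgue)"
        by (rule Bochner_Integration.integral_cong) (auto simp: bilinear_lmul[OF bil] f_def)
      also have "\<dots> = (\<integral>x. f x * Dfr \<phi> x j \<partial>lebesgue) *\<^sub>R B w j"
      proof (rule integral_scaleR_left)
        show "integrable lebesgue (\<lambda>x. f x * Dfr \<phi> x j)"
          using intD[of j] by (subst integrable_completion) auto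
      qed
      also have "(\<integral>x. f x * Dfr \<phi> x j \<partial>lebesgue) = c j"
        unfolding c_def by (rule integral_completion) simp
      finally show ?thesis .
    qed
    have "(\<Sum>j\<in>Basis. \<integral>x. frechet_derivative \<phi> (at x) j *\<^sub>R B (enn2real (Fs a \<xi> x) *\<^sub>R w) j \<partial>lebesgue)
        = (\<Sum>j\<in>Basis. c j *\<^sub>R B w j)" by (simp add: termj)
    also have "\<dots> = B w I" unfolding I_def
      by (simp add: linear_sum[OF linB] linear_scale[OF linB])
    also have "I = (I \<bullet> \<xi>) *\<^sub>R \<xi>"
    proof -
      have perp: "I \<bullet> e = 0" if e: "e \<bullet> \<xi> = 0" for e
      proof -
        have "I \<bullet> e = (\<Sum>j\<in>Basis. c j * (j \<bullet> e))" unfolding I_def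
          by (simp add: inner_sum_left)
        also have "\<dots> = (\<Sum>j\<in>Basis. (e \<bullet> j) * c j)"
          by (rule sum.cong) (auto simp: inner_commute[of _ e])
        also have "\<dots> = (\<Sum>j\<in>Basis. \<integral>x. (e \<bullet> j) * (f x * Dfr \<phi> x j) \<partial>lborel)"
          unfolding c_def by simp
        also have "\<dots> = (\<integral>x. (\<Sum>j\<in>Basis. (e \<bullet> j) * (f x * Dfr \<phi> x j)) \<partial>lborel)"
          by (rule Bochner_Integration.integral_sum[symmetric]) (use intD in auto)
        also have "\<dots> = (\<integral>x. f x * Dfr \<phi> x e \<partial>lborel)"
          by (rule Bochner_Integration.integral_cong)
             (auto simp: tf_dexp[OF tf, of _ e] sum_distrib_left algebra_simps)
        also have "\<dots> = 0" by (rule dist_zero[OF fm fi finv[OF e] tf])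
        finally show ?thesis .
      qed
      define e where "e = I - (I \<bullet> \<xi>) *\<^sub>R \<xi>"
      have xx: "\<xi> \<bullet> \<xi> = 1" using xi by (simp add: norm_eq_sqrt_inner)
      have e\<xi>: "e \<bullet> \<xi> = 0" unfolding e_def by (simp add: inner_diff_left xx)
      have "e \<bullet> e = I \<bullet> e - (I \<bullet> \<xi>) * (\<xi> \<bullet> e)" unfolding e_def
        by (simp add: inner_diff_left)
      also have "\<dots> = 0" using perp[OF e\<xi>] e\<xi> by (simp add: inner_commute)
      finally have "e = 0" by simp
      then show ?thesis unfolding e_def by simp
    qed
    also have "B w ((I \<bullet> \<xi>) *\<^sub>R \<xi>) = 0" by (simp add: bilinear_rmul[OF bil] Bw)
    finally show ?thesis .
  qed
  show "\<exists>\<nu> (g::'n \<Rightarrow> 'w). W_radon \<nu> g \<and>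
        (\<forall>\<phi>. test_function \<phi> \<longrightarrow>
           (\<integral>x. \<phi> x *\<^sub>R g x \<partial>\<nu>) =
           - (\<Sum>j\<in>Basis. \<integral>x. frechet_derivative \<phi> (at x) j *\<^sub>R B (enn2real (Fs a \<xi> x) *\<^sub>R w) j \<partial>lebesgue))"
    by (intro exI[of _ "null_measure lborel"] exI[of _ "\<lambda>_. 0::'w"] conjI W allI impI) (simp add: key)
qed

theorem lemma5p2:
  fixes B :: "'v::euclidean_space \<Rightarrow> 'n::euclidean_space \<Rightarrow> 'w::euclidean_space"
    and p :: real and q :: ennreal
  assumes "bilinear B"
    and "1 < p"
    and "1 \<le> q"
    and "\<forall>u::'n \<Rightarrow> 'v. BVA_loc B u \<longrightarrow> (AE x in lebesgue. Lpq_differentiable_at p q u x)"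
  shows "elliptic B"
proof (rule ccontr)
  assume ne: "\<not> elliptic B"
  note bil = assms(1) and p = assms(2) and q = assms(3) and hyp = assms(4)
  obtain \<xi>0 :: 'n where x0: "\<xi>0 \<noteq> 0" "\<not> inj (\<lambda>v. B v \<xi>0)" using ne unfolding elliptic_def by blast
  then obtain v1 v2 where v: "v1 \<noteq> v2" "B v1 \<xi>0 = B v2 \<xi>0" unfolding inj_def by blast
  define w where "w = v1 - v2"
  have w0: "w \<noteq> 0" unfolding w_def using v by simp
  have Bw0: "B w \<xi>0 = 0" unfolding w_def using v by (simp add: bilinear_lsub[OF bil])
  define \<xi> where "\<xi> = (1 / norm \<xi>0) *\<^sub>R \<xi>0"
  have xi: "norm \<xi> = 1" unfolding \<xi>_def using x0 by simp
  have Bw: "B w \<xi> = 0" unfolding \<xi>_def by (simp add: bilinear_rmul[OF bil] Bw0)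
  define a where "a = (1 + 1/p) / 2"
  have a: "1/p < a" "a < 1" unfolding a_def using p by (auto simp: field_simps)
  have a0: "0 < a" using a p by (smt (verit) divide_pos_pos)
  define u where "u y = enn2real (Fs a \<xi> y) *\<^sub>R w" for y
  have "BVA_loc B u" unfolding u_def by (rule BVA_u[OF bil xi Bw a0 a(2)])
  then have AEd: "AE x in lebesgue. Lpq_differentiable_at p q u x" using hyp by blast
  have nd: "\<not> Lpq_differentiable_at p q u x" for x
  proof
    assume "Lpq_differentiable_at p q u x"
    then obtain a0 M where M: "linear M" and
      ev: "\<forall>\<epsilon>>0. \<forall>\<^sub>F r in at_right 0. lorentz_norm p q (ball x r) (\<lambda>y. u y - (a0 + M (y - x)))
             \<le> ennreal (\<epsilon> * r powr (1 + real DIM('n) / p))"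
      unfolding Lpq_differentiable_at_def by blast
    have "\<forall>\<^sub>F r in at_right 0. lorentz_norm p q (ball x r) (\<lambda>y. u y - (a0 + M (y - x)))
             \<le> ennreal (1 * r powr (1 + real DIM('n) / p)) \<and> (0::real) < r"
      using ev[rule_format, of 1] eventually_at_right_less[of "0::real"] by (auto intro: eventually_conj)
    then obtain r :: real where r: "r > 0" and
      le: "lorentz_norm p q (ball x r) (\<lambda>y. u y - (a0 + M (y - x))) \<le> ennreal (1 * r powr (1 + real DIM('n) / p))"
      using eventually_happens'[OF trivial_limit_at_right_real] by blast
    have "lorentz_norm p q (ball x r) (\<lambda>y. u y - (a0 + M (y - x))) = top"
      unfolding u_def by (rule core_top[OF xi w0 p a r M q])
    with le show False by (simp add: top_unique)
  qed
  have "AE (x::'n) in lebesgue. False" using AEd nd by simp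
  then have "space lebesgue \<in> null_sets (lebesgue :: 'n measure)"
    by (subst AE_iff_null_sets) auto
  then have "emeasure lebesgue (UNIV :: 'n set) = 0" by auto
  moreover have "emeasure lebesgue (ball (0::'n) 1) \<le> emeasure lebesgue (UNIV :: 'n set)"
    by (rule emeasure_mono) auto
  moreover have "emeasure lebesgue (ball (0::'n) 1) > 0"
    using measure_ball_pos[of 1 "0::'n"] by (simp add: emeasure_eq_measure2)
  ultimately show False by simp
qed

end
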